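(* Let $A$ be a commutative ring with $1$, let $T\subset A$ be an archimedean semiring containing $\frac1n$ for some integer $n>1$, and let $f\in A$. Assume that for every maximal ideal $\mathfrak m$ of $A$ there exists $s\in A\setminus\mathfrak m$ such that $s\ge0$ on $X_A(T)$ and $sf\in T$. Then $f\in T$.
   Context: A semiring $T\subset A$ is a subset containing $0$ and $1$ and closed under addition and multiplication; it is archimedean if for every $f\in A$ there is $n\in\mathbb{Z}$ with $n+f\in T$. The real spectrum $\mathrm{Sper}(A)$ is the set of pairs $\alpha=(\mathfrak p,\le)$ with $\mathfrak p$ a prime ideal of $A$ and $\le$ an ordering of the residue field of $\mathfrak p$; for $a\in A$, $a\ge_\alpha0$ means the image of $a$ in that residue field is $\ge0$ under $\le$ (similarly $>_\alpha$). $X_A(T)=\{\alpha\in\mathrm{Sper}(A): a\ge_\alpha0 \text{ for all } a\in T\}$. An element $s\in A$ satisfies $s\ge0$ on $X_A(T)$ if $s\ge_\alpha0$ for all $\alpha\in X_A(T)$. *)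

theory Defs
  imports Main
begin

definition is_ideal :: "'a::comm_ring_1 set \<Rightarrow> bool" where
  "is_ideal I \<longleftrightarrow> 0 \<in> I \<and> (\<forall>x\<in>I. \<forall>y\<in>I. x + y \<in> I) \<and> (\<forall>x\<in>I. \<forall>a. a * x \<in> I)"

definition prime_ideal :: "'a::comm_ring_1 set \<Rightarrow> bool" where
  "prime_ideal I \<longleftrightarrow> is_ideal I \<and> I \<noteq> UNIV \<and> (\<forall>a b. a * b \<in> I \<longrightarrow> a \<in> I \<or> b \<in> I)"

definition maximal_ideal :: "'a::comm_ring_1 set \<Rightarrow> bool" where
  "maximal_ideal M \<longleftrightarrow> is_ideal M \<and> M \<noteq> UNIV \<and>
     (\<forall>J. is_ideal J \<and> M \<subseteq> J \<longrightarrow> J = M \<or> J = UNIV)"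

definition is_semiring :: "'a::comm_ring_1 set \<Rightarrow> bool" where
  "is_semiring T \<longleftrightarrow> 0 \<in> T \<and> 1 \<in> T \<and> (\<forall>x\<in>T. \<forall>y\<in>T. x + y \<in> T \<and> x * y \<in> T)"

definition archimedean :: "'a::comm_ring_1 set \<Rightarrow> bool" where
  "archimedean T \<longleftrightarrow> (\<forall>f. \<exists>n::int. of_int n + f \<in> T)"

text \<open>A point alpha = (p, ordering of the residue field of p)
  is encoded by its positive cone P = {a. a >=_alpha 0}, i.e. a prime cone of A:
  P + P in P, P P in P, P union -P = A, and the support P inter -P is a prime ideal
  (the support is p, and the ordering of the residue field is recovered from P).\<close>
definition sper :: "'a::comm_ring_1 set set" where
  "sper = {P. (\<forall>x\<in>P. \<forall>y\<in>P. x + y \<in> P \<and> x * y \<in> P) \<and> P \<union> uminus ` P = UNIV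
             \<and> prime_ideal (P \<inter> uminus ` P)}"

definition nonneg_at :: "'a::comm_ring_1 set \<Rightarrow> 'a \<Rightarrow> bool" where
  "nonneg_at \<alpha> a \<longleftrightarrow> a \<in> \<alpha>"

definition XT :: "'a::comm_ring_1 set \<Rightarrow> 'a set set" where
  "XT T = {\<alpha> \<in> sper. \<forall>a\<in>T. nonneg_at \<alpha> a}"

end

theory Submission
  imports Defs Complex_Main
begin


definition tmod :: "'a::comm_ring_1 set \<Rightarrow> 'a set \<Rightarrow> bool" where
  "tmod T M \<longleftrightarrow> T \<subseteq> M \<and> (\<forall>x\<in>M. \<forall>y\<in>M. x+y \<in> M) \<and> (\<forall>t\<in>T. \<forall>x\<in>M. t*x \<in> M)"

definition rhom :: "('a::comm_ring_1 \<Rightarrow> real) \<Rightarrow> bool" where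
  "rhom \<phi> \<longleftrightarrow> \<phi> 1 = 1 \<and> (\<forall>x y. \<phi> (x+y) = \<phi> x + \<phi> y) \<and> (\<forall>x y. \<phi> (x*y) = \<phi> x * \<phi> y)"

lemma addh_0: fixes \<psi> :: "'a::comm_ring_1 \<Rightarrow> real" assumes "\<forall>x y. \<psi> (x+y) = \<psi> x + (\<psi> y::real)" shows "\<psi> 0 = 0"
  using assms by (metis add.right_neutral add_cancel_right_right)

lemma addh_neg: fixes \<psi> :: "'a::comm_ring_1 \<Rightarrow> real" assumes "\<forall>x y. \<psi> (x+y) = \<psi> x + (\<psi> y::real)" shows "\<psi> (-x) = - \<psi> x"
proof -
  have "\<psi> (x + -x) = \<psi> x + \<psi> (-x)" using assms by blast
  then show ?thesis using addh_0[OF assms] by simp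
qed

lemma addh_nat: fixes \<psi> :: "'a::comm_ring_1 \<Rightarrow> real" assumes "\<forall>x y. \<psi> (x+y) = \<psi> x + (\<psi> y::real)"
  shows "\<psi> (of_nat k * y) = of_nat k * \<psi> y"
proof (induction k)
  case 0 then show ?case using addh_0[OF assms] by simp
next
  case (Suc k)
  have "\<psi> (of_nat (Suc k) * y) = \<psi> (y + of_nat k * y)" by (simp add: algebra_simps)
  also have "\<dots> = \<psi> y + \<psi> (of_nat k * y)" using assms by blast
  finally show ?case using Suc by (simp add: algebra_simps)
qed

lemma addh_int: fixes \<psi> :: "'a::comm_ring_1 \<Rightarrow> real" assumes "\<forall>x y. \<psi> (x+y) = \<psi> x + (\<psi> y::real)"
  shows "\<psi> (of_int k * y) = of_int k * \<psi> y"
proof (cases "k \<ge> 0")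
  case True
  then have "k = int (nat k)" by simp
  then show ?thesis using addh_nat[OF assms, of "nat k" y] by (metis of_int_of_nat_eq)
next
  case False
  then have k: "k = - int (nat (-k))" by simp
  have "\<psi> (of_int k * y) = \<psi> (- (of_nat (nat (-k)) * y))" by (subst k) simp
  also have "\<dots> = - (of_nat (nat (-k)) * \<psi> y)" using addh_neg[OF assms] addh_nat[OF assms] by simp
  finally show ?thesis using False by simp
qed

lemma rhom_add: "rhom \<phi> \<Longrightarrow> \<forall>x y. \<phi> (x+y) = \<phi> x + \<phi> y" by (simp add: rhom_def)
lemma rhom_0: "rhom \<phi> \<Longrightarrow> \<phi> 0 = 0" using addh_0 rhom_add by blast
lemma rhom_neg: "rhom \<phi> \<Longrightarrow> \<phi> (-x) = - \<phi> x" using addh_neg rhom_add by blast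
lemma rhom_diff: "rhom \<phi> \<Longrightarrow> \<phi> (x - y) = \<phi> x - \<phi> y"
  by (metis diff_conv_add_uminus rhom_add rhom_neg uminus_add_conv_diff)
lemma rhom_mult: "rhom \<phi> \<Longrightarrow> \<phi> (x*y) = \<phi> x * \<phi> y" by (simp add: rhom_def)
lemma rhom_1: "rhom \<phi> \<Longrightarrow> \<phi> 1 = 1" by (simp add: rhom_def)
lemma rhom_nat: "rhom \<phi> \<Longrightarrow> \<phi> (of_nat k) = of_nat k"
  using addh_nat[OF rhom_add, of \<phi> k 1] rhom_1[of \<phi>] by simp
lemma rhom_pow: "rhom \<phi> \<Longrightarrow> \<phi> (x^k) = \<phi> x ^ k"
  by (induction k) (simp_all add: rhom_1 rhom_mult)

lemma hom_XT:
  assumes "rhom \<phi>" "\<forall>t\<in>T. 0 \<le> \<phi> t"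
  shows "{x. 0 \<le> \<phi> x} \<in> XT T"
proof -
  define P where "P = {x. 0 \<le> \<phi> x}"
  have Pi: "x \<in> P \<longleftrightarrow> 0 \<le> \<phi> x" for x unfolding P_def by simp
  have ng: "\<phi> (-x) = - \<phi> x" for x using rhom_neg[OF assms(1)] .
  have sup: "P \<inter> uminus ` P = {x. \<phi> x = 0}"
  proof (intro set_eqI iffI)
    fix x assume "x \<in> P \<inter> uminus ` P"
    then obtain y where "0 \<le> \<phi> x" "x = - y" "0 \<le> \<phi> y" using Pi by auto
    then show "x \<in> {x. \<phi> x = 0}" using ng by auto
  next
    fix x assume "x \<in> {x. \<phi> x = 0}"
    then have "x \<in> P" "-x \<in> P" using ng Pi by auto
    then show "x \<in> P \<inter> uminus ` P" by (metis IntI image_eqI minus_minus)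
  qed
  have "is_ideal {x. \<phi> x = 0}" unfolding is_ideal_def
    using rhom_0[OF assms(1)] rhom_add[OF assms(1)] rhom_mult[OF assms(1)] by simp
  moreover have "{x. \<phi> x = 0} \<noteq> UNIV"
  proof
    assume "{x. \<phi> x = 0} = UNIV"
    then have "\<phi> 1 = 0" by (metis UNIV_I mem_Collect_eq)
    then show False using rhom_1[OF assms(1)] by simp
  qed
  moreover have "\<forall>a b. a * b \<in> {x. \<phi> x = 0} \<longrightarrow> a \<in> {x. \<phi> x = 0} \<or> b \<in> {x. \<phi> x = 0}"
    using rhom_mult[OF assms(1)] by simp
  ultimately have pr: "prime_ideal (P \<inter> uminus ` P)" unfolding prime_ideal_def sup by blast
  have un: "P \<union> uminus ` P = UNIV"
  proof (intro set_eqI iffI)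
    fix x :: 'a
    show "x \<in> P \<union> uminus ` P"
    proof (cases "0 \<le> \<phi> x")
      case True then show ?thesis using Pi by simp
    next
      case False
      then have "-x \<in> P" using ng Pi by simp
      then show ?thesis by (metis UnI2 image_eqI minus_minus)
    qed
  qed simp
  have cl: "\<forall>x\<in>P. \<forall>y\<in>P. x + y \<in> P \<and> x * y \<in> P"
    using rhom_add[OF assms(1)] rhom_mult[OF assms(1)] Pi by simp
  have sp: "P \<in> sper" unfolding sper_def by (intro CollectI conjI; fact)
  have tp: "\<forall>a\<in>T. nonneg_at P a" using assms(2) Pi unfolding nonneg_at_def by simp
  have "P \<in> {\<alpha> \<in> sper. \<forall>a\<in>T. nonneg_at \<alpha> a}"
    by (intro CollectI conjI; fact)
  then show ?thesis unfolding XT_def P_def .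
qed

locale arch =
  fixes T :: "'a::comm_ring_1 set" and n :: nat and u :: 'a
  assumes semi: "is_semiring T" and archT: "archimedean T" and n1: "n > 1"
    and uT: "u \<in> T" and nu: "of_nat n * u = 1"
begin

lemma T0: "0 \<in> T" using semi is_semiring_def by blast
lemma T1: "1 \<in> T" using semi is_semiring_def by blast
lemma Tadd: "x \<in> T \<Longrightarrow> y \<in> T \<Longrightarrow> x + y \<in> T" using semi is_semiring_def by blast
lemma Tmul: "x \<in> T \<Longrightarrow> y \<in> T \<Longrightarrow> x * y \<in> T" using semi is_semiring_def by blast
lemma Tnat: "of_nat k \<in> T"
  by (induction k) (simp_all add: T0 T1 Tadd)
lemma Tpow: "x \<in> T \<Longrightarrow> x ^ k \<in> T"
  by (induction k) (simp_all add: T1 Tmul)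
lemma upowT: "u ^ j \<in> T" using Tpow uT by blast
lemma nupow: "of_nat (n^j) * u^j = 1"
  by (metis nu of_nat_power power_mult_distrib power_one)

lemma arch_nat: "\<exists>N::nat. of_nat N + x \<in> T"
proof -
  obtain k :: int where k: "of_int k + x \<in> T" using archT unfolding archimedean_def by blast
  have "of_nat (nat (int (nat k) - k)) + (of_int k + x) \<in> T" using Tadd Tnat k by blast
  moreover have "of_nat (nat (int (nat k) - k)) + (of_int k + x) = of_nat (nat k) + x"
  proof -
    have "of_nat (nat (int (nat k) - k)) = (of_int (int (nat k) - k) :: 'a)" by simp
    then show ?thesis by simp
  qed
  ultimately show ?thesis by metis
qed

lemma arch_bound: "\<exists>N::nat. of_nat N + x \<in> T \<and> of_nat N - x \<in> T"
proof -
  obtain N1 :: nat where 1: "of_nat N1 + x \<in> T" using arch_nat by blast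
  obtain N2 :: nat where 2: "of_nat N2 + (-x) \<in> T" using arch_nat by blast
  have "of_nat (N1+N2) + x = of_nat N2 + (of_nat N1 + x)" by simp
  moreover have "of_nat (N1+N2) - x = of_nat N1 + (of_nat N2 + (-x))" by simp
  ultimately show ?thesis using 1 2 Tadd Tnat by metis
qed

lemma rhom_u: assumes "rhom \<phi>" shows "\<phi> (u^j) = 1 / real n ^ j"
proof -
  have "\<phi> (of_nat (n^j) * u^j) = 1" using nupow rhom_1[OF assms] by simp
  moreover have "\<phi> (of_nat (n^j)) = real (n^j)" using rhom_nat[OF assms] by blast
  ultimately have "real n ^ j * \<phi> (u^j) = 1" using rhom_mult[OF assms] by (metis of_nat_power)
  then show ?thesis using n1 by (simp add: field_simps)
qed

lemma rhom_bound: assumes "rhom \<phi>" "\<forall>t\<in>T. 0 \<le> \<phi> t"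
  shows "\<exists>N::nat. \<bar>\<phi> x\<bar> \<le> N"
proof -
  obtain N :: nat where "of_nat N + x \<in> T" "of_nat N - x \<in> T" using arch_bound by blast
  then have "0 \<le> \<phi> (of_nat N + x)" "0 \<le> \<phi> (of_nat N - x)" using assms(2) by auto
  moreover have "\<phi> (of_nat N + x) = real N + \<phi> x" "\<phi> (of_nat N - x) = real N - \<phi> x"
    using rhom_add[OF assms(1)] rhom_diff[OF assms(1)] rhom_nat[OF assms(1)] by auto
  ultimately have "\<bar>\<phi> x\<bar> \<le> real N" by linarith
  then show ?thesis by blast
qed

end


lemma (in arch) tmod_nat: "tmod T M \<Longrightarrow> x \<in> M \<Longrightarrow> of_nat k * x \<in> M"
  unfolding tmod_def using Tnat by simp

lemma addh_diff: fixes \<psi> :: "'a::comm_ring_1 \<Rightarrow> real"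
  assumes "\<forall>x y. \<psi> (x+y) = \<psi> x + \<psi> y" shows "\<psi> (x - y) = \<psi> x - \<psi> y"
proof -
  have "\<psi> ((x - y) + y) = \<psi> (x - y) + \<psi> y" using assms by blast
  then show ?thesis by simp
qed

locale maxmod = arch +
  fixes M
  assumes tm: "tmod T M" and nm1: "-1 \<notin> M" and tot: "\<And>a. a \<in> M \<or> -a \<in> M"
begin

lemma TM: "T \<subseteq> M" using tm unfolding tmod_def by (elim conjE)
lemma Madd: "x \<in> M \<Longrightarrow> y \<in> M \<Longrightarrow> x + y \<in> M" using tm unfolding tmod_def by simp
lemma Mmul: "t \<in> T \<Longrightarrow> x \<in> M \<Longrightarrow> t * x \<in> M" using tm unfolding tmod_def by simp
lemma M0: "0 \<in> M" using TM T0 by blast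

lemma NEG: assumes "of_int K * u^j \<in> M" shows "0 \<le> K"
proof (rule ccontr)
  assume "\<not> 0 \<le> K"
  then have c: "of_nat (nat (-K-1)) = (of_int (-K-1) :: 'a)" by simp
  have e: "of_int K * u^j + of_nat (nat (-K-1)) * u^j = - (u^j)"
    unfolding c by (simp add: algebra_simps)
  have "of_nat (nat (-K-1)) * u^j \<in> M" using Tnat upowT Tmul TM by blast
  then have "of_int K * u^j + of_nat (nat (-K-1)) * u^j \<in> M" using Madd[OF assms] by blast
  then have "- (u^j) \<in> M" unfolding e .
  then have "of_nat (n^j) * (- (u^j)) \<in> M" using Mmul Tnat by blast
  then show False using nm1 nupow by simp
qed

lemma scale: "(of_int k * u^j :: 'a) = of_int (k * int n ^ i) * u^(j+i)"
proof -
  have "(of_int (k * int n ^ i) * u^(j+i) :: 'a) = of_int k * u^j * (of_nat (n^i) * u^i)"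
    by (simp add: power_add algebra_simps)
  then show ?thesis using nupow by simp
qed

definition D :: "'a \<Rightarrow> real set" where
  "D x = {r. \<exists>k::int. \<exists>j::nat. r = of_int k / real n ^ j \<and> of_int k * u^j - x \<in> M}"

definition phi :: "'a \<Rightarrow> real" where "phi x = Inf (D x)"

lemma npos: "0 < real n ^ j" using n1 by simp

lemma D_ne: "D x \<noteq> {}"
proof -
  obtain N :: nat where "of_nat N - x \<in> T" using arch_bound by blast
  then have "of_int (int N) * u^0 - x \<in> M" using TM by auto
  then have "real N \<in> D x" unfolding D_def by (intro CollectI exI[of _ "int N"] exI[of _ 0]) simp
  then show ?thesis by blast
qed

lemma D_lb: assumes "r \<in> D x" "of_nat N + x \<in> M" shows "- real N \<le> r"
proof -
  obtain k j where r: "r = of_int k / real n ^ j" and m: "of_int k * u^j - x \<in> M"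
    using assms(1) unfolding D_def by blast
  have "(of_int k * u^j - x) + (of_nat N + x) = of_int k * u^j + of_nat N * (of_nat (n^j) * u^j)"
    using nupow by simp
  also have "\<dots> = of_int (k + int N * int n ^ j) * u^j" by (simp add: algebra_simps)
  finally have eq: "(of_int k * u^j - x) + (of_nat N + x) = of_int (k + int N * int n ^ j) * u^j" .
  have "of_int (k + int N * int n ^ j) * u^j \<in> M" using Madd[OF m assms(2)] unfolding eq .
  then have "0 \<le> k + int N * int n ^ j" by (rule NEG)
  then have "0 \<le> real_of_int (k + int N * int n ^ j)" by (simp only: of_int_0_le_iff)
  then have "- real N * real n ^ j \<le> real_of_int k" by simp
  then show ?thesis unfolding r by (subst pos_le_divide_eq[OF npos]) simp
qed

lemma D_bdd: "bdd_below (D x)"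
proof -
  obtain N :: nat where "of_nat N + x \<in> T" using arch_bound by blast
  then have "of_nat N + x \<in> M" using TM by blast
  then have "- real N \<le> r" if "r \<in> D x" for r using D_lb[OF that] by blast
  then show ?thesis by (rule bdd_belowI)
qed

lemma phi_le: "r \<in> D x \<Longrightarrow> phi x \<le> r"
  unfolding phi_def by (rule cInf_lower[OF _ D_bdd])

lemma phi_ge: assumes "\<And>r. r \<in> D x \<Longrightarrow> z \<le> r" shows "z \<le> phi x"
  unfolding phi_def by (rule cInf_greatest[OF D_ne assms])

lemma phi_nonneg: assumes "x \<in> M" shows "0 \<le> phi x"
proof (rule phi_ge)
  fix r assume "r \<in> D x"
  then obtain k j where r: "r = of_int k / real n ^ j" and m: "of_int k * u^j - x \<in> M"
    unfolding D_def by blast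
  have "of_int k * u^j \<in> M" using Madd[OF m assms] by simp
  then have "0 \<le> k" by (rule NEG)
  then show "0 \<le> r" unfolding r using npos[of j] by simp
qed

lemma D_add: assumes "r \<in> D x" "r' \<in> D y" shows "r + r' \<in> D (x + y)"
proof -
  obtain k j where r: "r = of_int k / real n ^ j" and m: "of_int k * u^j - x \<in> M"
    using assms(1) unfolding D_def by blast
  obtain k' j' where r': "r' = of_int k' / real n ^ j'" and m': "of_int k' * u^j' - y \<in> M"
    using assms(2) unfolding D_def by blast
  define K where "K = k * int n ^ j' + k' * int n ^ j"
  have "of_int K * u^(j+j') = of_int (k * int n ^ j') * u^(j+j') + of_int (k' * int n ^ j) * u^(j'+j)"
    unfolding K_def by (simp add: algebra_simps)
  also have "\<dots> = of_int k * u^j + of_int k' * u^j'" using scale by simp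
  finally have eqK: "of_int K * u^(j+j') = of_int k * u^j + of_int k' * u^j'" .
  have e2: "of_int K * u^(j+j') - (x + y) = (of_int k * u^j - x) + (of_int k' * u^j' - y)"
    unfolding eqK by (simp add: algebra_simps)
  have "of_int K * u^(j+j') - (x + y) \<in> M" unfolding e2 by (rule Madd[OF m m'])
  moreover have "r + r' = of_int K / real n ^ (j+j')"
    unfolding r r' K_def using npos[of j] npos[of j'] by (simp add: field_simps power_add)
  ultimately show ?thesis unfolding D_def by blast
qed

lemma phi_subadd: "phi (x + y) \<le> phi x + phi y"
proof -
  have "phi (x+y) - r' \<le> phi x" if "r' \<in> D y" for r'
  proof (rule phi_ge)
    fix r assume "r \<in> D x"
    then have "phi (x+y) \<le> r + r'" using phi_le D_add that by blast
    then show "phi (x+y) - r' \<le> r" by simp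
  qed
  then have "phi (x+y) - phi x \<le> phi y" using phi_ge[of y "phi (x+y) - phi x"] by force
  then show ?thesis by simp
qed

lemma gap: "\<exists>k::int. of_int k * u^j - x \<in> M \<and> x - of_int (k-1) * u^j \<in> M"
proof -
  obtain N :: nat where N1: "of_nat N + x \<in> T" and N2: "of_nat N - x \<in> T" using arch_bound by blast
  define L where "L = - (int N * int n ^ j) - 1"
  define K where "K = {m::nat. of_int (L + int m) * u^j - x \<in> M}"
  have lb: "- (int N * int n ^ j) \<le> k" if "of_int k * u^j - x \<in> M" for k
  proof -
    have "(of_int k * u^j - x) + (of_nat N + x) = of_int k * u^j + of_nat N * (of_nat (n^j) * u^j)"
      using nupow by simp
    also have "\<dots> = of_int (k + int N * int n ^ j) * u^j" by (simp add: algebra_simps)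
    finally have eq: "(of_int k * u^j - x) + (of_nat N + x) = of_int (k + int N * int n ^ j) * u^j" .
    have NM: "of_nat N + x \<in> M" using N1 TM by blast
    have "of_int (k + int N * int n ^ j) * u^j \<in> M" using Madd[OF that NM] unfolding eq .
    then have "0 \<le> k + int N * int n ^ j" by (rule NEG)
    then show ?thesis by simp
  qed
  have "nat (2 * int N * int n ^ j + 1) \<in> K"
  proof -
    have e1: "L + int (nat (2 * int N * int n ^ j + 1)) = int N * int n ^ j" unfolding L_def by simp
    have e2: "(of_int (int N * int n ^ j) * u^j :: 'a) = of_nat N" 
      using nupow[of j] by (simp add: algebra_simps)
    have "of_int (L + int (nat (2 * int N * int n ^ j + 1))) * u^j - x \<in> M"
      unfolding e1 e2 using N2 TM by blast
    then show ?thesis unfolding K_def mem_Collect_eq .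
  qed
  then have ex: "\<exists>m. m \<in> K" by blast
  define m0 where "m0 = (LEAST m. m \<in> K)"
  have m0K: "m0 \<in> K" unfolding m0_def using LeastI_ex[OF ex] .
  have "m0 \<noteq> 0"
  proof
    assume "m0 = 0"
    then have "of_int L * u^j - x \<in> M" using m0K unfolding K_def by simp
    then show False using lb[of L] unfolding L_def by simp
  qed
  then have "m0 - 1 < m0" by simp
  then have "m0 - 1 \<notin> K" unfolding m0_def by (rule not_less_Least)
  then have "of_int (L + int (m0 - 1)) * u^j - x \<notin> M" unfolding K_def by simp
  then have h: "- (of_int (L + int (m0 - 1)) * u^j - x) \<in> M" using tot by blast
  have eqm: "L + int (m0 - 1) = (L + int m0) - 1" using \<open>m0 \<noteq> 0\<close> by simp
  have "- (of_int ((L + int m0) - 1) * u^j - x) \<in> M" using h unfolding eqm .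
  then have "x - of_int ((L + int m0) - 1) * u^j \<in> M" by (simp only: minus_diff_eq)
  moreover have "of_int (L + int m0) * u^j - x \<in> M" using m0K unfolding K_def by simp
  ultimately show ?thesis by blast
qed

lemma small: assumes "0 < (e::real)" shows "\<exists>j. 1 / real n ^ j < e"
proof -
  have "1 < real n" using n1 by simp
  then obtain j where "1/e < real n ^ j" using real_arch_pow by blast
  then have "1 / e * e < real n ^ j * e" using assms by (rule mult_strict_right_mono)
  then have "1 < e * real n ^ j" using assms by (simp add: ac_simps)
  then have "1 / real n ^ j < e" by (subst pos_divide_less_eq[OF npos])
  then show ?thesis by blast
qed

lemma phi_0: "phi 0 = 0"
proof -
  have "0 \<in> D 0" unfolding D_def using M0 by (intro CollectI exI[of _ 0] exI[of _ 0]) simp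
  then have "phi 0 \<le> 0" by (rule phi_le)
  moreover have "0 \<le> phi 0" using M0 by (rule phi_nonneg)
  ultimately show ?thesis by linarith
qed

lemma phi_neg: "phi (-x) = - phi x"
proof -
  have lo: "0 \<le> phi x + phi (-x)" using phi_subadd[of x "-x"] phi_0 by simp
  have up: "phi x + phi (-x) \<le> 1 / real n ^ j" for j
  proof -
    obtain k where k1: "of_int k * u^j - x \<in> M" and k2: "x - of_int (k-1) * u^j \<in> M" using gap by blast
    have "of_int k / real n ^ j \<in> D x" unfolding D_def using k1 by blast
    moreover have "of_int (1-k) * u^j - (-x) = x - of_int (k-1) * u^j" by (simp add: algebra_simps)
    then have "of_int (1-k) * u^j - (-x) \<in> M" using k2 by simp
    then have "of_int (1-k) / real n ^ j \<in> D (-x)" unfolding D_def by blast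
    ultimately have "phi x + phi (-x) \<le> of_int k / real n ^ j + of_int (1-k) / real n ^ j"
      using phi_le add_mono by blast
    also have "\<dots> = 1 / real n ^ j" by (simp only: add_divide_distrib[symmetric]) simp
    finally show ?thesis .
  qed
  have "phi x + phi (-x) = 0"
  proof (rule ccontr)
    assume "phi x + phi (-x) \<noteq> 0"
    then have "0 < phi x + phi (-x)" using lo by simp
    then obtain j where "1 / real n ^ j < phi x + phi (-x)" using small by blast
    then show False using up[of j] by simp
  qed
  then show ?thesis by simp
qed

lemma phi_add: "phi (x + y) = phi x + phi y"
proof -
  have "phi (-(x+y)) \<le> phi (-x) + phi (-y)" using phi_subadd[of "-x" "-y"] by simp
  moreover have "phi (-(x+y)) = - phi (x+y)" "phi (-x) = - phi x" "phi (-y) = - phi y" using phi_neg by blast+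
  ultimately have "phi x + phi y \<le> phi (x+y)" by linarith
  then show ?thesis using phi_subadd by (simp add: antisym)
qed

lemma phi_one: "phi 1 = 1"
proof -
  have "1 \<in> D 1" unfolding D_def using M0 by (intro CollectI exI[of _ 1] exI[of _ 0]) simp
  moreover have "-1 \<in> D (-1)" unfolding D_def using M0 by (intro CollectI exI[of _ "-1"] exI[of _ 0]) simp
  then have "phi (-1) \<le> -1" by (rule phi_le)
  moreover have "phi 1 \<le> 1" using \<open>1 \<in> D 1\<close> by (rule phi_le)
  moreover have "phi (-1) = - phi 1" by (rule phi_neg)
  ultimately show ?thesis by linarith
qed

lemma uniq: assumes add: "\<forall>x y. \<psi> (x+y) = \<psi> x + (\<psi> y::real)" and one: "\<psi> 1 = 1"
  and pos: "\<forall>x\<in>M. 0 \<le> \<psi> x"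
  shows "\<psi> x = phi x"
proof -
  have pu: "\<psi> (u^j) = 1 / real n ^ j" for j
  proof -
    have "\<psi> (of_nat (n^j) * u^j) = real (n^j) * \<psi> (u^j)" by (rule addh_nat[OF add])
    then have "real n ^ j * \<psi> (u^j) = 1" using nupow one by simp
    then show ?thesis using npos[of j] by (simp add: eq_divide_eq ac_simps)
  qed
  have le: "\<psi> y \<le> phi y" for y
  proof (rule phi_ge)
    fix r assume "r \<in> D y"
    then obtain k j where r: "r = of_int k / real n ^ j" and m: "of_int k * u^j - y \<in> M"
      unfolding D_def by blast
    have "0 \<le> \<psi> (of_int k * u^j - y)" using pos m by blast
    also have "\<psi> (of_int k * u^j - y) = of_int k * \<psi> (u^j) - \<psi> y"
      using addh_int[OF add] addh_diff[OF add] by simp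
    finally show "\<psi> y \<le> r" unfolding r pu by simp
  qed
  have "\<psi> (-x) \<le> phi (-x)" using le .
  then have "phi x \<le> \<psi> x" using phi_neg addh_neg[OF add] by simp
  then show ?thesis using le[of x] by simp
qed

lemma phi_add_all: "\<forall>x y. phi (x + y) = phi x + phi y" using phi_add by simp

lemma phi_int: "phi (of_int k * y) = of_int k * phi y"
  by (rule addh_int[OF phi_add_all])

lemma phi_nat: "phi (of_nat k * y) = of_nat k * phi y"
  by (rule addh_nat[OF phi_add_all])

lemma phi_multT: assumes t: "t \<in> T" shows "phi (t * x) = phi t * phi x"
proof -
  define \<psi> where "\<psi> y = phi (t * y)" for y
  have add: "\<forall>x y. \<psi> (x+y) = \<psi> x + \<psi> y" unfolding \<psi>_def by (simp add: distrib_left phi_add)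
  have pos: "\<forall>y\<in>M. 0 \<le> \<psi> y" unfolding \<psi>_def by (simp add: Mmul[OF t] phi_nonneg)
  have "t \<in> M" using t TM by blast
  then have pt: "0 \<le> phi t" by (rule phi_nonneg)
  show ?thesis
  proof (cases "phi t = 0")
    case True
    obtain N :: nat where N1: "of_nat N + x \<in> T" and N2: "of_nat N - x \<in> T" using arch_bound by blast
    have "\<psi> (of_nat N * 1) = real N * \<psi> 1" by (rule addh_nat[OF add])
    then have p1: "\<psi> (of_nat N) = 0" unfolding \<psi>_def using True by simp
    have "of_nat N + x \<in> M" "of_nat N - x \<in> M" using N1 N2 TM by auto
    then have "0 \<le> \<psi> (of_nat N + x)" "0 \<le> \<psi> (of_nat N - x)" using pos by blast+
    moreover have "\<psi> (of_nat N + x) = \<psi> x" "\<psi> (of_nat N - x) = - \<psi> x"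
      using add addh_diff[OF add] p1 by simp_all
    ultimately have "\<psi> x = 0" by simp
    then show ?thesis unfolding \<psi>_def using True by simp
  next
    case False
    then have ptp: "0 < phi t" using pt by simp
    define \<chi> where "\<chi> y = \<psi> y / phi t" for y
    have "\<forall>x y. \<chi> (x+y) = \<chi> x + \<chi> y" unfolding \<chi>_def using add by (simp add: add_divide_distrib)
    moreover have "\<chi> 1 = 1" unfolding \<chi>_def \<psi>_def using ptp by simp
    moreover have "\<forall>y\<in>M. 0 \<le> \<chi> y" unfolding \<chi>_def using pos ptp by simp
    ultimately have "\<chi> x = phi x" by (rule uniq)
    then show ?thesis unfolding \<chi>_def \<psi>_def using ptp by (simp add: divide_eq_eq ac_simps)
  qed
qed

lemma phi_mult: "phi (a * x) = phi a * phi x"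
proof -
  obtain N :: nat where N1: "of_nat N + a \<in> T" using arch_bound by blast
  have "phi ((of_nat N + a) * x) = phi (of_nat N + a) * phi x" using phi_multT[OF N1] .
  moreover have "phi ((of_nat N + a) * x) = real N * phi x + phi (a * x)"
    using phi_add phi_nat by (simp add: distrib_right)
  moreover have "phi (of_nat N + a) = real N + phi a"
    using phi_add phi_nat[of N 1] phi_one by simp
  ultimately show ?thesis by (simp add: algebra_simps)
qed

lemma phi_rhom: "rhom phi"
  unfolding rhom_def by (simp add: phi_one phi_add phi_mult)

lemma phi_M: "x \<in> M \<Longrightarrow> 0 \<le> phi x" using phi_nonneg .

end


lemma (in arch) arch_fact: "arch T n u"
  using semi archT n1 uT nu by (rule arch.intro)

lemma tmodI: assumes "T \<subseteq> M" "\<And>x y. x \<in> M \<Longrightarrow> y \<in> M \<Longrightarrow> x + y \<in> M"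
  "\<And>t x. t \<in> T \<Longrightarrow> x \<in> M \<Longrightarrow> t * x \<in> M" shows "tmod T M"
  unfolding tmod_def using assms by blast

lemma (in arch) maxmod_exists:
  assumes M0: "tmod T M0" "-g \<in> M0" "-1 \<notin> M0"
  shows "\<exists>M. maxmod T n u M \<and> -g \<in> M"
proof -
  define F where "F = {M. tmod T M \<and> -g \<in> M \<and> -1 \<notin> M}"
  have Fi: "X \<in> F \<longleftrightarrow> tmod T X \<and> -g \<in> X \<and> -1 \<notin> X" for X unfolding F_def by simp
  have ne: "F \<noteq> {}" using M0 Fi by blast
  have ch: "\<Union>C \<in> F" if C1: "C \<noteq> {}" and C2: "subset.chain F C" for C
  proof -
    have CF: "C \<subseteq> F" and cmp: "\<And>X Y. X \<in> C \<Longrightarrow> Y \<in> C \<Longrightarrow> X \<subseteq> Y \<or> Y \<subseteq> X"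
      using C2 unfolding subset_chain_def by blast+
    obtain X0 where X0: "X0 \<in> C" using C1 by blast
    have tmX: "tmod T X" if "X \<in> C" for X using CF that Fi by blast
    have "T \<subseteq> X0" using tmX[OF X0] unfolding tmod_def by blast
    then have a: "T \<subseteq> \<Union>C" using X0 by blast
    have b: "x + y \<in> \<Union>C" if xC: "x \<in> \<Union>C" and yC: "y \<in> \<Union>C" for x y
    proof -
      obtain X Y where XY: "X \<in> C" "Y \<in> C" "x \<in> X" "y \<in> Y" using xC yC by blast
      show ?thesis
      proof (cases "X \<subseteq> Y")
        case True
        then have "x + y \<in> Y" using tmX[OF XY(2)] XY unfolding tmod_def by blast
        then show ?thesis using XY by blast
      next
        case False
        then have "Y \<subseteq> X" using cmp XY by blast
        then have "x + y \<in> X" using tmX[OF XY(1)] XY unfolding tmod_def by blast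
        then show ?thesis using XY by blast
      qed
    qed
    have c: "t * x \<in> \<Union>C" if tT: "t \<in> T" and xC: "x \<in> \<Union>C" for t x
    proof -
      obtain X where X: "X \<in> C" "x \<in> X" using xC by blast
      then have "t * x \<in> X" using tmX[OF X(1)] tT unfolding tmod_def by blast
      then show ?thesis using X by blast
    qed
    have "tmod T (\<Union>C)" using a b c by (rule tmodI)
    moreover have "-g \<in> \<Union>C" using X0 CF Fi by blast
    moreover have "-1 \<notin> \<Union>C" using CF Fi by blast
    ultimately show ?thesis using Fi by blast
  qed
  have "\<exists>M\<in>F. \<forall>X\<in>F. M \<subseteq> X \<longrightarrow> X = M" by (rule subset_Zorn_nonempty[OF ne ch])
  then obtain M where MF: "M \<in> F" and mx: "\<And>X. X \<in> F \<Longrightarrow> M \<subseteq> X \<Longrightarrow> X = M" by blast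
  have tmM: "tmod T M" and gM: "-g \<in> M" and m1M: "-1 \<notin> M" using MF Fi by blast+
  have TM: "T \<subseteq> M" using tmM unfolding tmod_def by blast
  have Madd: "x \<in> M \<Longrightarrow> y \<in> M \<Longrightarrow> x + y \<in> M" for x y using tmM unfolding tmod_def by blast
  have Mmul: "t \<in> T \<Longrightarrow> x \<in> M \<Longrightarrow> t * x \<in> M" for t x using tmM unfolding tmod_def by blast
  have key: "\<exists>m s. m \<in> M \<and> s \<in> T \<and> -1 = m + s * b" if bM: "b \<notin> M" for b
  proof (rule ccontr)
    assume H: "\<not> (\<exists>m s. m \<in> M \<and> s \<in> T \<and> -1 = m + s * b)"
    define X where "X = {m + s * b | m s. m \<in> M \<and> s \<in> T}"
    have Xi: "z \<in> X \<longleftrightarrow> (\<exists>m s. m \<in> M \<and> s \<in> T \<and> z = m + s * b)" for z unfolding X_def by blast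
    have MX: "M \<subseteq> X"
    proof
      fix z assume "z \<in> M"
      moreover have "z = z + 0 * b" by simp
      ultimately show "z \<in> X" using Xi T0 by blast
    qed
    have "tmod T X"
    proof (rule tmodI)
      show "T \<subseteq> X" using TM MX by blast
    next
      fix x y assume "x \<in> X" "y \<in> X"
      then obtain m s m' s' where "m \<in> M" "s \<in> T" "x = m + s * b" "m' \<in> M" "s' \<in> T" "y = m' + s' * b"
        using Xi by meson
      moreover have "m + s * b + (m' + s' * b) = (m + m') + (s + s') * b" by (simp add: algebra_simps)
      ultimately show "x + y \<in> X" using Xi Madd Tadd by metis
    next
      fix t x assume "t \<in> T" "x \<in> X"
      then obtain m s where "m \<in> M" "s \<in> T" "x = m + s * b" using Xi by meson
      moreover have "t * (m + s * b) = t * m + (t * s) * b" by (simp add: algebra_simps)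
      ultimately show "t * x \<in> X" using Xi Mmul Tmul \<open>t \<in> T\<close> by metis
    qed
    moreover have "-g \<in> X" using gM MX by blast
    moreover have "-1 \<notin> X" using H Xi by blast
    ultimately have "X \<in> F" using Fi by blast
    then have "X = M" using mx MX by blast
    moreover have "b \<in> X"
    proof -
      have "b = 0 + 1 * b" by simp
      then show ?thesis using Xi TM T0 T1 by blast
    qed
    ultimately show False using bM by blast
  qed
  have tot: "a \<in> M \<or> -a \<in> M" for a
  proof (rule ccontr)
    assume "\<not> (a \<in> M \<or> -a \<in> M)"
    then have aM: "a \<notin> M" and naM: "-a \<notin> M" by auto
    obtain m1 s1 where m1: "m1 \<in> M" "s1 \<in> T" and e1: "-1 = m1 + s1 * a" using key[OF aM] by blast
    obtain m2 s2 where m2: "m2 \<in> M" "s2 \<in> T" and e2: "-1 = m2 + s2 * (-a)" using key[OF naM] by blast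
    have "s2 * (m1 + s1 * a) + s1 * (m2 + s2 * (-a)) = s2 * m1 + s1 * m2" by (simp add: algebra_simps)
    moreover have "s2 * (m1 + s1 * a) + s1 * (m2 + s2 * (-a)) = - (s1 + s2)"
      unfolding e1[symmetric] e2[symmetric] by (simp add: algebra_simps)
    ultimately have "- (s1 + s2) = s2 * m1 + s1 * m2" by simp
    moreover have "s2 * m1 + s1 * m2 \<in> M" using Madd Mmul m1 m2 by blast
    ultimately have "- (s1 + s2) \<in> M" by simp
    moreover have "s2 \<in> M" using m2 TM by blast
    ultimately have "- (s1 + s2) + s2 \<in> M" using Madd by blast
    then have ns1: "- s1 \<in> M" by simp
    obtain N :: nat where N: "of_nat N + a \<in> T" using arch_bound by blast
    have "(of_nat N + a) * s1 \<in> M" using Mmul[OF N] m1 TM by blast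
    moreover have "of_nat N * (- s1) \<in> M" using Mmul[OF Tnat ns1] .
    ultimately have "(of_nat N + a) * s1 + of_nat N * (- s1) \<in> M" using Madd by blast
    moreover have "(of_nat N + a) * s1 + of_nat N * (- s1) = s1 * a" by (simp add: algebra_simps)
    ultimately have "s1 * a \<in> M" by simp
    then have "m1 + s1 * a \<in> M" using Madd m1 by blast
    then show False using e1 m1M by simp
  qed
  have "maxmod T n u M"
    by (rule maxmod.intro[OF arch_fact]) (rule maxmod_axioms.intro[OF tmM m1M tot])
  then show ?thesis using gM by blast
qed

lemma (in arch) n_pow_ge: "N \<le> n ^ N"
proof -
  have "N < 2 ^ N" by (rule less_exp)
  moreover have "(2::nat) ^ N \<le> n ^ N" using n1 by (intro power_mono) auto
  ultimately show ?thesis by linarith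
qed

lemma (in arch) KD:
  assumes pos: "\<And>\<phi>. rhom \<phi> \<Longrightarrow> \<forall>t\<in>T. 0 \<le> \<phi> t \<Longrightarrow> 0 < \<phi> g"
  shows "g \<in> T"
proof -
  have "\<exists>s m. s \<in> T \<and> m \<in> T \<and> s * g = 1 + m"
  proof (rule ccontr)
    assume H: "\<not> (\<exists>s m. s \<in> T \<and> m \<in> T \<and> s * g = 1 + m)"
    define M0 where "M0 = {a - b * g | a b. a \<in> T \<and> b \<in> T}"
    have Mi: "z \<in> M0 \<longleftrightarrow> (\<exists>a b. a \<in> T \<and> b \<in> T \<and> z = a - b * g)" for z unfolding M0_def by blast
    have "tmod T M0"
    proof (rule tmodI)
      show "T \<subseteq> M0"
      proof
        fix z assume "z \<in> T"
        moreover have "z = z - 0 * g" by simp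
        ultimately show "z \<in> M0" using Mi T0 by blast
      qed
    next
      fix x y assume "x \<in> M0" "y \<in> M0"
      then obtain a b a' b' where "a \<in> T" "b \<in> T" "x = a - b * g" "a' \<in> T" "b' \<in> T" "y = a' - b' * g"
        using Mi by meson
      moreover have "a - b * g + (a' - b' * g) = (a + a') - (b + b') * g" by (simp add: algebra_simps)
      ultimately show "x + y \<in> M0" using Mi Tadd by metis
    next
      fix t x assume "t \<in> T" "x \<in> M0"
      then obtain a b where "a \<in> T" "b \<in> T" "x = a - b * g" using Mi by meson
      moreover have "t * (a - b * g) = t * a - (t * b) * g" by (simp add: algebra_simps)
      ultimately show "t * x \<in> M0" using Mi Tmul \<open>t \<in> T\<close> by metis
    qed
    moreover have "-g \<in> M0"
    proof -
      have "-g = 0 - 1 * g" by simp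
      then show ?thesis using Mi T0 T1 by blast
    qed
    moreover have "-1 \<notin> M0"
    proof
      assume "-1 \<in> M0"
      then obtain a b where ab: "a \<in> T" "b \<in> T" "-1 = a - b * g" using Mi by blast
      then have "b * g = 1 + a" by (simp add: algebra_simps)
      then show False using H ab by blast
    qed
    ultimately obtain M where mm: "maxmod T n u M" and gM: "-g \<in> M" using maxmod_exists by blast
    interpret mm: maxmod T n u M by (rule mm)
    have "rhom mm.phi" by (rule mm.phi_rhom)
    moreover have "\<forall>t\<in>T. 0 \<le> mm.phi t" using mm.TM mm.phi_nonneg by blast
    ultimately have "0 < mm.phi g" by (rule pos)
    moreover have "0 \<le> mm.phi (-g)" using gM by (rule mm.phi_nonneg)
    ultimately show False using mm.phi_neg[of g] by simp
  qed
  then obtain s m where sT: "s \<in> T" and mT: "m \<in> T" and sg: "s * g = 1 + m" by blast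
  obtain Ns :: nat where Ns: "of_nat Ns - s \<in> T" using arch_bound by blast
  define j where "j = Ns"
  define k where "k = n ^ j"
  have kNs: "Ns \<le> k" unfolding k_def j_def by (rule n_pow_ge)
  have ee: "of_nat k - s = of_nat (k - Ns) + (of_nat Ns - s)" using kNs by (simp add: of_nat_diff)
  have ks: "of_nat k - s \<in> T" unfolding ee by (rule Tadd[OF Tnat Ns])
  have uk: "u^j * of_nat k = 1" unfolding k_def using nupow[of j] by (simp add: ac_simps)
  have step: "g + of_nat R * u^j \<in> T \<Longrightarrow> g \<in> T" for R
  proof (induction R)
    case 0 then show ?case by simp
  next
    case (Suc R)
    define r where "r = of_nat (Suc R) * u^j"
    have gr: "g + r \<in> T" using Suc.prems unfolding r_def .
    have rT: "r \<in> T" unfolding r_def using Tmul[OF Tnat upowT] .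
    have e1: "m + (of_nat k - s) * (g + r) + s * r = of_nat k * (g + r) + m - s * g"
      by (simp add: algebra_simps)
    have e2: "of_nat k * (g + r) + m - s * g = of_nat k * (g + r) - 1" unfolding sg by simp
    have e3: "u^j * (of_nat k * (g + r) - 1) = (u^j * of_nat k) * (g + r) - u^j"
      by (simp add: algebra_simps)
    have e4: "g + r - u^j = g + of_nat R * u^j" unfolding r_def by (simp add: algebra_simps)
    have "u^j * (m + (of_nat k - s) * (g + r) + s * r) = g + of_nat R * u^j"
      unfolding e1 e2 e3 uk e4[symmetric] by simp
    moreover have "u^j * (m + (of_nat k - s) * (g + r) + s * r) \<in> T"
      using Tmul Tadd upowT mT ks gr sT rT by metis
    ultimately have "g + of_nat R * u^j \<in> T" by simp
    then show ?case by (rule Suc.IH)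
  qed
  obtain R0 :: nat where R0: "of_nat R0 + g \<in> T" using arch_nat by blast
  have "of_nat (R0 * n^j) * u^j = (of_nat R0 :: 'a)"
    using nupow[of j] by (simp add: algebra_simps)
  then have "g + of_nat (R0 * n^j) * u^j \<in> T" using R0 by (simp add: ac_simps)
  then show ?thesis by (rule step)
qed



inductive_set gen :: "'a::comm_ring_1 set \<Rightarrow> 'a set" for S where
  gen0: "0 \<in> gen S"
| genS: "s \<in> S \<Longrightarrow> x \<in> gen S \<Longrightarrow> a * s + x \<in> gen S"

lemma gen_add: "x \<in> gen S \<Longrightarrow> y \<in> gen S \<Longrightarrow> x + y \<in> gen S"
proof (induction x rule: gen.induct)
  case gen0 then show ?case by simp
next
  case (genS s x a)
  have "a * s + x + y = a * s + (x + y)" by (simp add: algebra_simps)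
  then show ?case using gen.genS[OF genS.hyps(1) genS.IH[OF genS.prems], of a] by (simp add: add.assoc)
qed

lemma gen_mul: "x \<in> gen S \<Longrightarrow> b * x \<in> gen S"
proof (induction x rule: gen.induct)
  case gen0 then show ?case by (simp add: gen.gen0)
next
  case (genS s x a)
  have "b * (a * s + x) = (b * a) * s + b * x" by (simp add: algebra_simps)
  then show ?case using gen.genS[OF genS.hyps(1) genS.IH] by simp
qed

lemma gen_ideal: "is_ideal (gen S)"
  unfolding is_ideal_def using gen.gen0 gen_add gen_mul by blast

lemma gen_sub: "s \<in> S \<Longrightarrow> s \<in> gen S"
  using gen.genS[OF _ gen.gen0, of s S 1] by simp

lemma max_ideal_exists:
  fixes I :: "'a::comm_ring_1 set"
  assumes I: "is_ideal I" "1 \<notin> I"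
  shows "\<exists>M. maximal_ideal M \<and> I \<subseteq> M"
proof -
  define F where "F = {J. is_ideal J \<and> I \<subseteq> J \<and> (1::'a) \<notin> J}"
  have Fi: "J \<in> F \<longleftrightarrow> is_ideal J \<and> I \<subseteq> J \<and> 1 \<notin> J" for J unfolding F_def by simp
  have ne: "F \<noteq> {}" using I Fi by blast
  have ch: "\<Union>C \<in> F" if C1: "C \<noteq> {}" and C2: "subset.chain F C" for C
  proof -
    have CF: "C \<subseteq> F" and cmp: "\<And>X Y. X \<in> C \<Longrightarrow> Y \<in> C \<Longrightarrow> X \<subseteq> Y \<or> Y \<subseteq> X"
      using C2 unfolding subset_chain_def by blast+
    obtain X0 where X0: "X0 \<in> C" using C1 by blast
    have idX: "is_ideal X" if "X \<in> C" for X using CF that Fi by blast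
    have a: "0 \<in> \<Union>C" using idX[OF X0] X0 unfolding is_ideal_def by blast
    have b: "x + y \<in> \<Union>C" if xC: "x \<in> \<Union>C" and yC: "y \<in> \<Union>C" for x y
    proof -
      obtain X Y where XY: "X \<in> C" "Y \<in> C" "x \<in> X" "y \<in> Y" using xC yC by blast
      show ?thesis
      proof (cases "X \<subseteq> Y")
        case True
        then have "x + y \<in> Y" using idX[OF XY(2)] XY unfolding is_ideal_def by blast
        then show ?thesis using XY by blast
      next
        case False
        then have "Y \<subseteq> X" using cmp XY by blast
        then have "x + y \<in> X" using idX[OF XY(1)] XY unfolding is_ideal_def by blast
        then show ?thesis using XY by blast
      qed
    qed
    have c: "r * x \<in> \<Union>C" if xC: "x \<in> \<Union>C" for r x
    proof -
      obtain X where X: "X \<in> C" "x \<in> X" using xC by blast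
      then have "r * x \<in> X" using idX[OF X(1)] unfolding is_ideal_def by blast
      then show ?thesis using X by blast
    qed
    have "is_ideal (\<Union>C)" unfolding is_ideal_def using a b c by blast
    moreover have "I \<subseteq> \<Union>C" using X0 CF Fi by blast
    moreover have "1 \<notin> \<Union>C" using CF Fi by blast
    ultimately show ?thesis using Fi by blast
  qed
  have "\<exists>M\<in>F. \<forall>X\<in>F. M \<subseteq> X \<longrightarrow> X = M" by (rule subset_Zorn_nonempty[OF ne ch])
  then obtain M where MF: "M \<in> F" and mx: "\<And>X. X \<in> F \<Longrightarrow> M \<subseteq> X \<Longrightarrow> X = M" by blast
  have idM: "is_ideal M" and IM: "I \<subseteq> M" and oM: "1 \<notin> M" using MF Fi by blast+
  have "M \<noteq> UNIV" using oM by blast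
  moreover have "J = M \<or> J = UNIV" if J: "is_ideal J" "M \<subseteq> J" for J
  proof (cases "1 \<in> J")
    case True
    have "x \<in> J" for x
    proof -
      have "x * 1 \<in> J" using J(1) True unfolding is_ideal_def by blast
      then show ?thesis by simp
    qed
    then show ?thesis by blast
  next
    case False
    then have "J \<in> F" using Fi J IM by blast
    then show ?thesis using mx J by blast
  qed
  ultimately have "maximal_ideal M" unfolding maximal_ideal_def using idM by blast
  then show ?thesis using IM by blast
qed

lemma rhom_sum: "rhom \<phi> \<Longrightarrow> \<phi> (\<Sum>i<(k::nat). f i) = (\<Sum>i<k. \<phi> (f i))"
  by (induction k) (simp_all add: rhom_0 rhom_add)

lemma geo_ineq:
  fixes \<gamma> :: real
  assumes "0 \<le> \<gamma>" "\<gamma> \<le> 1"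
  shows "1 + real k * \<gamma> ^ k \<le> (\<Sum>i<Suc k. \<gamma> ^ i)"
proof (induction k)
  case 0 then show ?case by simp
next
  case (Suc k)
  have "\<gamma> ^ Suc k \<le> \<gamma> ^ k" using assms by (simp add: mult_left_le_one_le)
  then have "real k * \<gamma> ^ Suc k \<le> real k * \<gamma> ^ k" by (simp add: mult_left_mono)
  then have "1 + real (Suc k) * \<gamma> ^ Suc k \<le> 1 + real k * \<gamma> ^ k + \<gamma> ^ Suc k"
    by (simp add: algebra_simps)
  also have "\<dots> \<le> (\<Sum>i<Suc k. \<gamma> ^ i) + \<gamma> ^ Suc k" using Suc.IH by simp
  also have "\<dots> = (\<Sum>i<Suc (Suc k). \<gamma> ^ i)" by simp
  finally show ?case .
qed



theorem theorem4p2: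
  fixes T :: "'a::comm_ring_1 set" and f :: 'a
  assumes "is_semiring T"
    and "archimedean T"
    and "\<exists>n::int. n > 1 \<and> (\<exists>u\<in>T. of_int n * u = 1)"
    and "\<forall>M. maximal_ideal M \<longrightarrow>
           (\<exists>s. s \<notin> M \<and> (\<forall>\<alpha>\<in>XT T. nonneg_at \<alpha> s) \<and> s * f \<in> T)"
  shows "f \<in> T"
proof -
  obtain n0 :: int and u where n0: "n0 > 1" and uT: "u \<in> T" and nu0: "of_int n0 * u = 1"
    using assms(3) by blast
  define nn where "nn = nat n0"
  have nn1: "nn > 1" using n0 unfolding nn_def by simp
  have "(of_nat nn :: 'a) = of_int n0" unfolding nn_def using n0 by simp
  then have nu: "of_nat nn * u = 1" using nu0 by simp
  interpret A: arch T nn u by (rule arch.intro[OF assms(1) assms(2) nn1 uT nu])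
  define H where "H \<phi> \<longleftrightarrow> rhom \<phi> \<and> (\<forall>t\<in>T. 0 \<le> \<phi> t)" for \<phi> :: "'a \<Rightarrow> real"
  define S where "S = {s. (\<forall>\<alpha>\<in>XT T. nonneg_at \<alpha> s) \<and> s * f \<in> T}"
  have Si: "s \<in> S \<longleftrightarrow> (\<forall>\<alpha>\<in>XT T. s \<in> \<alpha>) \<and> s * f \<in> T" for s
    unfolding S_def nonneg_at_def by simp
  have XTD: "\<alpha> \<in> sper \<and> (\<forall>a\<in>T. a \<in> \<alpha>)" if "\<alpha> \<in> XT T" for \<alpha>
    using that unfolding XT_def nonneg_at_def by simp
  have sperD: "(\<forall>x\<in>\<alpha>. \<forall>y\<in>\<alpha>. x + y \<in> \<alpha> \<and> x * y \<in> \<alpha>) \<and> \<alpha> \<union> uminus ` \<alpha> = UNIV"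
    if "\<alpha> \<in> sper" for \<alpha> :: "'a set"
    using that unfolding sper_def by simp
  have sper_mul: "x * y \<in> \<alpha>" if "\<alpha> \<in> sper" "x \<in> \<alpha>" "y \<in> \<alpha>" for \<alpha> :: "'a set" and x y
    using that unfolding sper_def by simp
  have S0: "0 \<in> S"
  proof -
    have "0 \<in> \<alpha>" if "\<alpha> \<in> XT T" for \<alpha>
    proof -
      have "(0::'a) \<in> \<alpha> \<union> uminus ` \<alpha>" using sperD XTD[OF that] by blast
      then show ?thesis by auto
    qed
    moreover have "0 * f \<in> T" using A.T0 by simp
    ultimately show ?thesis using Si by blast
  qed
  have Sadd: "s + s' \<in> S" if "s \<in> S" "s' \<in> S" for s s'
  proof -
    have "s + s' \<in> \<alpha>" if a: "\<alpha> \<in> XT T" for \<alpha>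
      using sperD XTD[OF a] \<open>s \<in> S\<close> \<open>s' \<in> S\<close> Si a by blast
    moreover have "(s + s') * f = s * f + s' * f" by (simp add: algebra_simps)
    then have "(s + s') * f \<in> T" using A.Tadd Si that by simp
    ultimately show ?thesis using Si by blast
  qed
  have STmul: "t * s \<in> S" if tT: "t \<in> T" and sS: "s \<in> S" for t s
  proof -
    have "t * s \<in> \<alpha>" if a: "\<alpha> \<in> XT T" for \<alpha>
    proof -
      have "t \<in> \<alpha>" "s \<in> \<alpha>" using XTD[OF a] tT sS Si a by blast+
      moreover have "\<alpha> \<in> sper" using XTD[OF a] by blast
      ultimately show ?thesis using sper_mul by blast
    qed
    moreover have "t * (s * f) \<in> T" using A.Tmul tT sS Si by blast
    then have "(t * s) * f \<in> T" by (simp add: mult.assoc)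
    ultimately show ?thesis using Si by blast
  qed
  have Spos: "0 \<le> \<phi> s" if "s \<in> S" "H \<phi>" for s \<phi>
  proof -
    have "{x. 0 \<le> \<phi> x} \<in> XT T" using that(2) unfolding H_def by (intro hom_XT) auto
    moreover have "\<forall>\<alpha>\<in>XT T. s \<in> \<alpha>" using Si that(1) by blast
    ultimately have "s \<in> {x. 0 \<le> \<phi> x}" by (rule bspec[rotated])
    then show ?thesis by simp
  qed
  have one: "1 \<in> gen S"
  proof (rule ccontr)
    assume "1 \<notin> gen S"
    then have "\<exists>M. maximal_ideal M \<and> gen S \<subseteq> M" by (rule max_ideal_exists[OF gen_ideal])
    then obtain M where M: "maximal_ideal M" "gen S \<subseteq> M" by blast
    have "\<exists>s. s \<notin> M \<and> (\<forall>\<alpha>\<in>XT T. nonneg_at \<alpha> s) \<and> s * f \<in> T" using assms(4) M(1) by simp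
    then obtain s where s: "s \<notin> M" "\<forall>\<alpha>\<in>XT T. nonneg_at \<alpha> s" "s * f \<in> T" by blast
    have "s \<in> S" unfolding S_def mem_Collect_eq using s(2,3) by (intro conjI)
    then have "s \<in> M" using gen_sub M(2) by blast
    then show False using s(1) by blast
  qed
  have inv: "\<exists>s\<in>S. \<exists>B::nat. \<forall>p q. (\<forall>\<phi>. H \<phi> \<longrightarrow> real B * \<bar>\<phi> q\<bar> < \<phi> p) \<longrightarrow> p * s + q * x \<in> S"
    if "x \<in> gen S" for x
    using that
  proof (induction x rule: gen.induct)
    case gen0
    have "p * 0 + q * 0 \<in> S" for p q using S0 by simp
    then show ?case using S0 by blast
  next
    case (genS s0 x a)
    obtain s B where sS: "s \<in> S"
      and P: "\<And>p q. (\<forall>\<phi>. H \<phi> \<longrightarrow> real B * \<bar>\<phi> q\<bar> < \<phi> p) \<Longrightarrow> p * s + q * x \<in> S"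
      using genS.IH by blast
    obtain Na :: nat where Na1: "of_nat Na + a \<in> T" and Na2: "of_nat Na - a \<in> T" using A.arch_bound by blast
    define B' where "B' = max B Na"
    have "p * (s + s0) + q * (a * s0 + x) \<in> S"
      if hyp: "\<forall>\<phi>. H \<phi> \<longrightarrow> real B' * \<bar>\<phi> q\<bar> < \<phi> p" for p q
    proof -
      have "\<forall>\<phi>. H \<phi> \<longrightarrow> real B * \<bar>\<phi> q\<bar> < \<phi> p"
      proof (intro allI impI)
        fix \<phi> assume "H \<phi>"
        have "real B * \<bar>\<phi> q\<bar> \<le> real B' * \<bar>\<phi> q\<bar>" unfolding B'_def by (intro mult_right_mono) auto
        then show "real B * \<bar>\<phi> q\<bar> < \<phi> p" using hyp \<open>H \<phi>\<close> by force
      qed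
      then have ps: "p * s + q * x \<in> S" by (rule P)
      have "p + q * a \<in> T"
      proof (rule A.KD)
        fix \<phi> :: "'a \<Rightarrow> real" assume r: "rhom \<phi>" and pT: "\<forall>t\<in>T. 0 \<le> \<phi> t"
        then have Hp: "H \<phi>" unfolding H_def by blast
        have "0 \<le> \<phi> (of_nat Na + a)" "0 \<le> \<phi> (of_nat Na - a)" using pT Na1 Na2 by blast+
        moreover have "\<phi> (of_nat Na + a) = real Na + \<phi> a" "\<phi> (of_nat Na - a) = real Na - \<phi> a"
          using rhom_add[OF r] rhom_diff[OF r] rhom_nat[OF r] by auto
        ultimately have "\<bar>\<phi> a\<bar> \<le> real Na" by linarith
        also have "\<dots> \<le> real B'" unfolding B'_def by simp
        finally have "\<bar>\<phi> q\<bar> * \<bar>\<phi> a\<bar> \<le> \<bar>\<phi> q\<bar> * real B'" by (intro mult_left_mono) auto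
        then have "\<bar>\<phi> q * \<phi> a\<bar> \<le> real B' * \<bar>\<phi> q\<bar>" by (simp add: abs_mult ac_simps)
        moreover have "real B' * \<bar>\<phi> q\<bar> < \<phi> p" using hyp Hp by blast
        moreover have "\<phi> (p + q * a) = \<phi> p + \<phi> q * \<phi> a" using rhom_add[OF r] rhom_mult[OF r] by simp
        moreover have "- \<bar>\<phi> q * \<phi> a\<bar> \<le> \<phi> q * \<phi> a" by simp
        ultimately show "0 < \<phi> (p + q * a)" by linarith
      qed
      then have "(p + q * a) * s0 \<in> S" using STmul genS.hyps(1) by blast
      then have "(p * s + q * x) + (p + q * a) * s0 \<in> S" using Sadd ps by blast
      moreover have "(p * s + q * x) + (p + q * a) * s0 = p * (s + s0) + q * (a * s0 + x)"
        by (simp add: algebra_simps)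
      ultimately show ?thesis by simp
    qed
    moreover have "s + s0 \<in> S" using Sadd sS genS.hyps(1) by blast
    ultimately show ?case by blast
  qed
  obtain s B where sS: "s \<in> S"
    and P: "\<And>p q. (\<forall>\<phi>. H \<phi> \<longrightarrow> real B * \<bar>\<phi> q\<bar> < \<phi> p) \<Longrightarrow> p * s + q * 1 \<in> S"
    using inv[OF one] by blast
  obtain Ns :: nat where Ns: "of_nat Ns - s \<in> T" using A.arch_bound by blast
  define c where "c = u ^ Ns"
  define g0 where "g0 = 1 - c * s"
  define K where "K = B * nn ^ Ns"
  define p where "p = c * (\<Sum>i<Suc K. g0 ^ i)"
  define q where "q = g0 ^ Suc K"
  have cs: "c * s = 1 - g0" unfolding g0_def by simp
  have "p * s = (1 - g0) * (\<Sum>i<Suc K. g0 ^ i)" unfolding p_def cs[symmetric] by (simp add: algebra_simps)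
  also have "\<dots> = 1 - g0 ^ Suc K" by (rule one_diff_power_eq[symmetric])
  finally have id: "p * s + q * 1 = 1" unfolding q_def by simp
  have cond: "\<forall>\<phi>. H \<phi> \<longrightarrow> real B * \<bar>\<phi> q\<bar> < \<phi> p"
  proof (intro allI impI)
    fix \<phi> assume Hp: "H \<phi>"
    then have r: "rhom \<phi>" and pT: "\<forall>t\<in>T. 0 \<le> \<phi> t" unfolding H_def by blast+
    define \<sigma> where "\<sigma> = \<phi> s"
    define d where "d = real nn ^ Ns"
    have s0: "0 \<le> \<sigma>" unfolding \<sigma>_def using Spos[OF sS Hp] .
    have "0 \<le> \<phi> (of_nat Ns - s)" using pT Ns by blast
    then have s1: "\<sigma> \<le> real Ns" unfolding \<sigma>_def using rhom_diff[OF r] rhom_nat[OF r] by simp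
    have dpos: "0 < d" unfolding d_def using nn1 by simp
    have "Ns \<le> nn ^ Ns" by (rule A.n_pow_ge)
    then have "real Ns \<le> d" unfolding d_def by (metis of_nat_le_iff of_nat_power)
    then have sd: "\<sigma> \<le> d" using s1 by linarith
    have pc: "\<phi> c = 1 / d" unfolding c_def d_def by (rule A.rhom_u[OF r])
    define \<gamma> where "\<gamma> = \<phi> g0"
    have ga: "\<gamma> = 1 - \<sigma> / d" unfolding \<gamma>_def g0_def \<sigma>_def
      using rhom_diff[OF r] rhom_1[OF r] rhom_mult[OF r] pc by simp
    have g0': "0 \<le> \<gamma>" unfolding ga using sd dpos by simp
    have g1: "\<gamma> \<le> 1" unfolding ga using s0 dpos by simp
    have pq: "\<phi> q = \<gamma> ^ Suc K" unfolding q_def \<gamma>_def by (rule rhom_pow[OF r])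
    have "\<phi> p = \<phi> c * (\<Sum>i<Suc K. \<phi> (g0 ^ i))" unfolding p_def
      by (simp only: rhom_mult[OF r] rhom_sum[OF r])
    also have "\<dots> = (\<Sum>i<Suc K. \<gamma> ^ i) / d" unfolding pc \<gamma>_def rhom_pow[OF r] by simp
    finally have pp: "\<phi> p = (\<Sum>i<Suc K. \<gamma> ^ i) / d" .
    have "\<gamma> ^ Suc K \<le> \<gamma> ^ K" using g0' g1 by (simp add: mult_left_le_one_le)
    then have "real K * \<gamma> ^ Suc K \<le> real K * \<gamma> ^ K" by (simp add: mult_left_mono)
    then have sg: "1 + real K * \<gamma> ^ Suc K \<le> (\<Sum>i<Suc K. \<gamma> ^ i)" using geo_ineq[OF g0' g1, of K] by linarith
    have rK: "real K = real B * d" unfolding K_def d_def by simp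
    have "(1 + real K * \<gamma> ^ Suc K) / d \<le> (\<Sum>i<Suc K. \<gamma> ^ i) / d" using sg dpos by (intro divide_right_mono) auto
    moreover have "(1 + real K * \<gamma> ^ Suc K) / d = 1 / d + real B * \<gamma> ^ Suc K"
      unfolding rK using dpos by (simp add: add_divide_distrib)
    moreover have "0 < 1 / d" using dpos by simp
    ultimately have "real B * \<gamma> ^ Suc K < (\<Sum>i<Suc K. \<gamma> ^ i) / d" by linarith
    moreover have "\<bar>\<phi> q\<bar> = \<gamma> ^ Suc K" unfolding pq using g0' by simp
    ultimately show "real B * \<bar>\<phi> q\<bar> < \<phi> p" unfolding pp by simp
  qed
  have "p * s + q * 1 \<in> S" using cond by (rule P)
  then have "1 \<in> S" unfolding id .
  then have "1 * f \<in> T" using Si by blast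
  then show "f \<in> T" by simp
qed


end
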